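(* Let $\Pi$ be a nonempty set and $\mathcal{P}:\Pi\times\Pi\to[-1,1]$ anti-symmetric ($\mathcal{P}(\pi,\pi')=-\mathcal{P}(\pi',\pi)$ for all $\pi,\pi'$); for $p,q\in\Delta(\Pi)$ let $\mathcal{P}(p,q)=\mathbb{E}_{\pi\sim p,\pi'\sim q}[\mathcal{P}(\pi,\pi')]$. Let $\mathcal{O}$ be a no-regret online linear optimization algorithm over $\Delta(\Pi)$, i.e. it produces iterates $p_{t+1}=\mathcal{O}(\ell_{1:t})\in\Delta(\Pi)$ such that for every sequence of $T$ loss functions of the form $\ell_t(p)=\mathbb{E}_{\pi\sim p}[f_t(\pi)]$ with $f_t:\Pi\to[-1,1]$, $$\sum_{t=1}^T\ell_t(p_t)-\min_{p^\star\in\Delta(\Pi)}\sum_{t=1}^T\ell_t(p^\star)\le\mathsf{Reg}(T),\qquad \lim_{T\to\infty}\frac{\mathsf{Reg}(T)}{T}=0.$$ Run a single copy of $\mathcal{O}$: initialize $p_1\in\Delta(\Pi)$ and set $p_{t+1}=\mathcal{O}(\ell^{\mathrm{SPO}}_{1:t})$, where $\ell_t^{\mathrm{SPO}}(p)=\mathbb{E}_{\pi\sim p,\pi'\sim p_t}[-\mathcal{P}(\pi,\pi')]$. Then $\bar p=(p_1+\dots+p_T)/T$ is a $\frac{2\mathsf{Reg}(T)}{T}$-approximate Minimax Winner, i.e. $$\max_{p^\star\in\Delta(\Pi)}\mathcal{P}(p^\star,\bar p)-\min_{q^\star\in\Delta(\Pi)}\mathcal{P}(\bar p,q^\star)\l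e\frac{2\mathsf{Reg}(T)}{T}.$$
   Context: $\Delta(\Pi)$ is the set of probability distributions over $\Pi$. A pair $(p,q)\in\Delta(\Pi)^2$ is an $\epsilon$-approximate Minimax Winner (Nash equilibrium of the zero-sum game with payoff $\mathcal{P}$) if $\max_{p^\star}\mathcal{P}(p^\star,q)-\min_{q^\star}\mathcal{P}(p,q^\star)\le\epsilon$; the claim is that $(\bar p,\bar p)$ is such a pair. Full feedback is assumed: at round $t$ the algorithm observes the entire loss function $\ell_t^{\mathrm{SPO}}$. *)

theory Defs
  imports "HOL-Probability.Probability"
begin

definition pref_mix :: "('a \<Rightarrow> 'a \<Rightarrow> real) \<Rightarrow> 'a pmf \<Rightarrow> 'a pmf \<Rightarrow> real" where
  "pref_mix P p q = measure_pmf.expectation p (\<lambda>x. measure_pmf.expectation q (\<lambda>y. P x y))"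

definition lin_loss :: "'a pmf \<Rightarrow> ('a \<Rightarrow> real) \<Rightarrow> real" where
  "lin_loss p f = measure_pmf.expectation p f"

text \<open>An online linear optimization algorithm is a map from the (full-feedback) history
  of loss functions l_1..l_t (each given by its f_t) to the next iterate p_{t+1};
  p_1 = Alg [].\<close>
definition regret_bound :: "(('a \<Rightarrow> real) list \<Rightarrow> 'a pmf) \<Rightarrow> (nat \<Rightarrow> real) \<Rightarrow> bool" where
  "regret_bound Alg Reg \<longleftrightarrow>
     (\<forall>fs. (\<forall>t<length fs. \<forall>x. \<bar>(fs ! t) x\<bar> \<le> 1) \<longrightarrow>
        (\<Sum>t<length fs. lin_loss (Alg (take t fs)) (fs ! t))
          - (INF p. \<Sum>t<length fs. lin_loss p (fs ! t)) \<le> Reg (length fs))"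

definition no_regret :: "(('a \<Rightarrow> real) list \<Rightarrow> 'a pmf) \<Rightarrow> (nat \<Rightarrow> real) \<Rightarrow> bool" where
  "no_regret Alg Reg \<longleftrightarrow> regret_bound Alg Reg \<and> (\<lambda>T. Reg T / real T) \<longlonglongrightarrow> 0"

primrec spo_hist :: "(('a \<Rightarrow> real) list \<Rightarrow> 'a pmf) \<Rightarrow> ('a \<Rightarrow> 'a \<Rightarrow> real) \<Rightarrow> nat \<Rightarrow> ('a \<Rightarrow> real) list" where
  "spo_hist Alg P 0 = []"
| "spo_hist Alg P (Suc t) = spo_hist Alg P t @
     [(\<lambda>x. - measure_pmf.expectation (Alg (spo_hist Alg P t)) (\<lambda>y. P x y))]"

text \<open>Iterate p_{t+1} (0-indexed: spo_iter Alg P t is p_{t+1}).\<close>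
definition spo_iter :: "(('a \<Rightarrow> real) list \<Rightarrow> 'a pmf) \<Rightarrow> ('a \<Rightarrow> 'a \<Rightarrow> real) \<Rightarrow> nat \<Rightarrow> 'a pmf" where
  "spo_iter Alg P t = Alg (spo_hist Alg P t)"

definition avg_iter :: "(('a \<Rightarrow> real) list \<Rightarrow> 'a pmf) \<Rightarrow> ('a \<Rightarrow> 'a \<Rightarrow> real) \<Rightarrow> nat \<Rightarrow> 'a pmf" where
  "avg_iter Alg P T = bind_pmf (pmf_of_set {..<T}) (\<lambda>t. spo_iter Alg P t)"

end

theory Submission imports Defs begin

lemma exp_bound:
  fixes h :: "'a \<Rightarrow> real"
  assumes "\<And>x. \<bar>h x\<bar> \<le> B"
  shows "\<bar>measure_pmf.expectation p h\<bar> \<le> B"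
proof -
  have int: "integrable (measure_pmf p) h"
    by (rule measure_pmf.integrable_const_bound[where B=B]) (use assms in auto)
  have "\<bar>measure_pmf.expectation p h\<bar> \<le> measure_pmf.expectation p (\<lambda>x. \<bar>h x\<bar>)"
    using integral_norm_bound[of p h] by simp
  also have "\<dots> \<le> measure_pmf.expectation p (\<lambda>x. B)"
    by (rule integral_mono) (use int assms in auto)
  also have "\<dots> = B" by simp
  finally show ?thesis .
qed

lemma exp_bind:
  fixes h :: "'b \<Rightarrow> real"
  assumes "\<And>x. \<bar>h x\<bar> \<le> B"
  shows "measure_pmf.expectation (bind_pmf p f) h = measure_pmf.expectation p (\<lambda>x. measure_pmf.expectation (f x) h)"
proof -
  have m: "(\<lambda>x. measure_pmf (f x)) \<in> measurable (measure_pmf p) (subprob_algebra (count_space UNIV))"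
    using measurable_measure_pmf[of f] by (simp add: measurable_cong_sets)
  show ?thesis
    unfolding measure_pmf_bind
    by (rule integral_bind[where B=B and B'=1, OF _ _ m]) (auto simp: assms measure_pmf.finite_measure_axioms)
qed

lemma exp_swap:
  fixes g :: "'a \<Rightarrow> 'b \<Rightarrow> real"
  assumes "\<And>x y. \<bar>g x y\<bar> \<le> B"
  shows "measure_pmf.expectation p (\<lambda>x. measure_pmf.expectation q (\<lambda>y. g x y))
       = measure_pmf.expectation q (\<lambda>y. measure_pmf.expectation p (\<lambda>x. g x y))"
proof -
  have "measure_pmf.expectation (bind_pmf p (\<lambda>x. bind_pmf q (\<lambda>y. return_pmf (x,y)))) (case_prod g)
      = measure_pmf.expectation (bind_pmf q (\<lambda>y. bind_pmf p (\<lambda>x. return_pmf (x,y)))) (case_prod g)"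
    by (subst bind_commute_pmf) (rule refl)
  moreover have "measure_pmf.expectation (bind_pmf p (\<lambda>x. bind_pmf q (\<lambda>y. return_pmf (x,y)))) (case_prod g)
     = measure_pmf.expectation p (\<lambda>x. measure_pmf.expectation q (\<lambda>y. g x y))"
    apply (subst exp_bind[where B=B])
     apply (simp add: assms split: prod.splits)
    apply (subst exp_bind[where B=B])
     apply (simp add: assms split: prod.splits)
    apply simp
    done
  moreover have "measure_pmf.expectation (bind_pmf q (\<lambda>y. bind_pmf p (\<lambda>x. return_pmf (x,y)))) (case_prod g)
     = measure_pmf.expectation q (\<lambda>y. measure_pmf.expectation p (\<lambda>x. g x y))"
    apply (subst exp_bind[where B=B])
     apply (simp add: assms split: prod.splits)
    apply (subst exp_bind[where B=B])
     apply (simp add: assms split: prod.splits)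
    apply simp
    done
  ultimately show ?thesis by simp
qed

lemma pm_bound:
  assumes "\<And>x y. \<bar>P x y\<bar> \<le> 1"
  shows "\<bar>pref_mix P p q\<bar> \<le> 1"
  unfolding pref_mix_def
  by (intro exp_bound) (use assms exp_bound in blast)

lemma pm_anti:
  assumes "\<And>x y. \<bar>P x y\<bar> \<le> 1" and "\<And>x y. P x y = - P y x"
  shows "pref_mix P p q = - pref_mix P q p"
proof -
  have "pref_mix P p q = measure_pmf.expectation q (\<lambda>y. measure_pmf.expectation p (\<lambda>x. P x y))"
    unfolding pref_mix_def by (rule exp_swap[where B=1]) (rule assms(1))
  also have "\<dots> = measure_pmf.expectation q (\<lambda>y. - measure_pmf.expectation p (\<lambda>x. P y x))"
  proof -
    have e: "(\<lambda>x. P x y) = (\<lambda>x. - P y x)" for y by (rule ext) (rule assms(2))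
    show ?thesis by (simp only: e integral_minus)
  qed
  also have "\<dots> = - pref_mix P q p"
    unfolding pref_mix_def by (rule integral_minus)
  finally show ?thesis .
qed

lemma spo_len: "length (spo_hist Alg P T) = T"
  by (induction T) auto

lemma spo_nth: "t < T \<Longrightarrow> spo_hist Alg P T ! t = (\<lambda>x. - measure_pmf.expectation (spo_iter Alg P t) (\<lambda>y. P x y))"
proof (induction T)
  case 0 then show ?case by simp
next
  case (Suc T)
  then show ?case
  proof (cases "t < T")
    case True then show ?thesis using Suc by (simp add: nth_append spo_len)
  next
    case False then have "t = T" using Suc by simp
    then show ?thesis by (simp add: nth_append spo_len spo_iter_def)
  qed
qed

lemma spo_take: "t \<le> T \<Longrightarrow> take t (spo_hist Alg P T) = spo_hist Alg P t"
proof (induction T)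
  case 0 then show ?case by simp
next
  case (Suc T)
  show ?case
  proof (cases "t \<le> T")
    case True
    then have "take t (spo_hist Alg P (Suc T)) = take t (spo_hist Alg P T)" by (simp add: spo_len)
    then show ?thesis using Suc.IH True by simp
  next
    case False then have "t = Suc T" using Suc.prems by simp
    then show ?thesis using spo_len[of Alg P "Suc T"] by (metis order_refl take_all)
  qed
qed

lemma avg_exp:
  fixes h :: "'a \<Rightarrow> real"
  assumes "\<And>x. \<bar>h x\<bar> \<le> B" and "T > 0"
  shows "measure_pmf.expectation (avg_iter Alg P T) h = (\<Sum>t<T. measure_pmf.expectation (spo_iter Alg P t) h) / real T"
proof -
  have "measure_pmf.expectation (avg_iter Alg P T) h
      = measure_pmf.expectation (pmf_of_set {..<T}) (\<lambda>t. measure_pmf.expectation (spo_iter Alg P t) h)"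
    unfolding avg_iter_def by (rule exp_bind) (rule assms(1))
  also have "\<dots> = (\<Sum>t<T. measure_pmf.expectation (spo_iter Alg P t) h) / real (card {..<T})"
    by (rule integral_pmf_of_set) (use assms(2) in auto)
  finally show ?thesis by simp
qed

theorem theorem1:
  fixes P :: "'a \<Rightarrow> 'a \<Rightarrow> real"
    and Alg :: "('a \<Rightarrow> real) list \<Rightarrow> 'a pmf"
    and Reg :: "nat \<Rightarrow> real"
    and T :: nat
  assumes bounded: "\<And>x y. \<bar>P x y\<bar> \<le> 1"
    and antisym: "\<And>x y. P x y = - P y x"
    and alg: "no_regret Alg Reg"
    and T_pos: "T > 0"
  shows "(SUP p. pref_mix P p (avg_iter Alg P T)) - (INF q. pref_mix P (avg_iter Alg P T) q)
           \<le> 2 * Reg T / real T"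
proof -
  define q where "q = avg_iter Alg P T"
  define fs where "fs = spo_hist Alg P T"
  define S where "S = (\<lambda>p. pref_mix P p q)"
  have len: "length fs = T" by (simp add: fs_def spo_len)
  have ib: "\<bar>measure_pmf.expectation r (\<lambda>y. P x y)\<bar> \<le> 1" for r x
    by (rule exp_bound) (rule bounded)
  have fsb: "\<forall>t<length fs. \<forall>x. \<bar>(fs ! t) x\<bar> \<le> 1"
    unfolding fs_def spo_len using ib by (auto simp: spo_nth)
  have ll: "lin_loss p (fs ! t) = - pref_mix P p (spo_iter Alg P t)" if "t < T" for p t
    using that by (simp add: fs_def spo_nth lin_loss_def pref_mix_def integral_minus)
  have S_eq: "S p = (\<Sum>t<T. pref_mix P p (spo_iter Alg P t)) / real T" for p
  proof -
    have "S p = - pref_mix P q p" unfolding S_def by (rule pm_anti[OF bounded antisym])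
    also have "pref_mix P q p = (\<Sum>t<T. pref_mix P (spo_iter Alg P t) p) / real T"
      unfolding pref_mix_def q_def by (rule avg_exp[where B=1, OF _ T_pos]) (rule ib)
    also have "- \<dots> = (\<Sum>t<T. pref_mix P p (spo_iter Alg P t)) / real T"
    proof -
      have sw: "pref_mix P (spo_iter Alg P t) p = - pref_mix P p (spo_iter Alg P t)" for t
        by (rule pm_anti[OF bounded antisym])
      show ?thesis by (simp add: sw sum_negf)
    qed
    finally show ?thesis .
  qed
  have zero: "(\<Sum>t<length fs. lin_loss (Alg (take t fs)) (fs ! t)) = 0"
  proof -
    have "lin_loss (Alg (take t fs)) (fs ! t) = 0" if "t < T" for t
    proof -
      have "Alg (take t fs) = spo_iter Alg P t"
        using that by (simp add: fs_def spo_take spo_iter_def)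
      moreover have "pref_mix P r r = 0" for r
        using pm_anti[OF bounded antisym, where p=r and q=r] by simp
      ultimately show ?thesis using ll[OF that] by simp
    qed
    then show ?thesis by (simp add: len)
  qed
  have sumS: "(\<Sum>t<length fs. lin_loss p (fs ! t)) = - real T * S p" for p
    using T_pos by (simp add: len ll S_eq sum_negf)
  have reg: "0 - (INF p. - real T * S p) \<le> Reg T"
  proof -
    have rb: "regret_bound Alg Reg" using alg by (simp add: no_regret_def)
    have "(\<Sum>t<length fs. lin_loss (Alg (take t fs)) (fs ! t))
          - (INF p. \<Sum>t<length fs. lin_loss p (fs ! t)) \<le> Reg (length fs)"
      using rb fsb unfolding regret_bound_def by blast
    then have "0 - (INF p. - real T * S p) \<le> Reg (length fs)" by (simp only: zero sumS)
    then show ?thesis by (simp only: len)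
  qed
  have Sb: "\<bar>S p\<bar> \<le> 1" for p unfolding S_def by (rule pm_bound[OF bounded])
  have bdd: "bdd_below (range (\<lambda>p. - real T * S p))"
  proof
    fix y assume "y \<in> range (\<lambda>p. - real T * S p)"
    then obtain p where "y = - real T * S p" by auto
    moreover have "- real T \<le> - real T * S p"
    proof -
      have "real T * S p \<le> real T * 1"
        by (rule mult_left_mono) (use Sb[of p] abs_le_D1 in auto)
      then show ?thesis by simp
    qed
    ultimately show "- real T \<le> y" by simp
  qed
  have Sle: "S p \<le> Reg T / real T" for p
  proof -
    have "(INF p. - real T * S p) \<le> - real T * S p" by (rule cINF_lower[OF bdd]) simp
    then have "real T * S p \<le> Reg T" using reg by simp
    then show ?thesis using T_pos by (simp add: field_simps)
  qed
  have sup: "(SUP p. S p) \<le> Reg T / real T"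
    by (rule cSUP_least) (auto simp: Sle)
  have inf: "- (Reg T / real T) \<le> (INF r. pref_mix P q r)"
  proof (rule cINF_greatest)
    fix r
    have "pref_mix P q r = - S r" unfolding S_def by (rule pm_anti[OF bounded antisym])
    then show "- (Reg T / real T) \<le> pref_mix P q r" using Sle[of r] by simp
  qed simp
  have two: "Reg T / real T + Reg T / real T = 2 * Reg T / real T"
    by (simp only: mult_2 add_divide_distrib)
  have e1: "(SUP p. S p) = (SUP p. pref_mix P p (avg_iter Alg P T))"
    by (simp add: S_def q_def)
  have e2: "(INF r. pref_mix P q r) = (INF r. pref_mix P (avg_iter Alg P T) r)"
    by (simp add: q_def)
  have sup': "(SUP p. pref_mix P p (avg_iter Alg P T)) \<le> Reg T / real T"
    using sup by (simp only: e1)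
  have inf': "- (Reg T / real T) \<le> (INF r. pref_mix P (avg_iter Alg P T) r)"
    using inf by (simp only: e2)
  have "(SUP p. pref_mix P p (avg_iter Alg P T)) - (INF r. pref_mix P (avg_iter Alg P T) r)
        \<le> Reg T / real T - - (Reg T / real T)"
    by (rule diff_mono[OF sup' inf'])
  also have "\<dots> = 2 * Reg T / real T" using two by (simp only: diff_minus_eq_add)
  finally show ?thesis .
qed

end
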